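(* Let $m$ be an odd integer $\ge5$ and $l\ge(m+1)/2$. For any $u_1,\ldots,u_m\in V$, $$(\pi\otimes1_V^{\otimes m-4}\otimes\pi)(1_V^{\otimes m}\otimes C^{\otimes l})|u_1u_2\cdots u_m\omega_0^l| = (\pi\otimes1_V^{\otimes m-4}\otimes\pi)\big((2g)^lu_1u_2\cdots u_m+(-1)^l\Phi(u)\big),$$ where $$\Phi(u)=\sum_{\substack{1\le k\le m-1\\ k\text{ odd}}}(-1)^{\frac{k-1}2}\Big(\mathrm{Cont}(u_{m-k+1}\cdots u_{m-1})\,u_m\omega_0^{\frac{k-1}2}u_1u_2\cdots u_{m-k}+\mathrm{Cont}(u_2\cdots u_k)\,u_{k+1}\cdots u_m\omega_0^{\frac{k-1}2}u_1\Big).$$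
   Context: $\mathbb{K}$ is a field of characteristic zero and $V$ a symplectic $\mathbb{K}$-vector space of dimension $2g$ with symplectic basis $a_1,\ldots,a_g,b_1,\ldots,b_g$; $\omega_0=\sum_i(a_i\otimes b_i-b_i\otimes a_i)\in V^{\otimes 2}$. $C\colon V^{\otimes2}\to\mathbb{K}$ is bilinear with $C(a_i\otimes b_j)=\delta_{ij}$, $C(b_i\otimes a_j)=-\delta_{ij}$, $C(a_i\otimes a_j)=C(b_i\otimes b_j)=0$ (so $C(\omega_0)=2g$); $Q=\ker C$ and $\pi\colon V^{\otimes2}\to Q$ is the projection along the decomposition $V^{\otimes2}=Q\oplus\mathbb{K}\omega_0$. Products are taken in the tensor algebra $T(V)$. Here $|\cdot|$ is the cyclic symmetrization $|x_1x_2\cdots x_N|=\sum_{k=0}^{N-1}\nu^k(x_1\cdots x_N)$ for $x_i\in V$, where $\nu(x_1x_2\cdots x_N)=x_2\cdots x_Nx_1$ (this identifies $T(V)/[T(V),T(V)]$ with cyclically invariant tensors). $C^{\otimes l}$ is applied to the last $2l$ tensor factors in consecutive pairs. For $v_1,\ldots,v_{2r}\in V$, $\mathrm{Cont}(v_1v_2\cdots v_{2r})=C(v_1\otimes v_2)C(v_3\otimes v_4)\cdots C(v_{2r-1}\otimes v_{2r})$ (equal to $1$ for $r=0$). *)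

theory Defs
  imports Main
begin

text \<open>Model: V = K^(2g) with basis e_0..e_(2g-1), where a_i = e_i and b_i = e_(g+i) (i < g).
  A vector is a function nat => 'a vanishing at indices >= 2g.
  An element of the tensor algebra T(V) is a function on words (nat lists);
  the coefficient of e_(i1) (x) ... (x) e_(iN) is x [i1,...,iN].\<close>

type_synonym 'a tensor = "nat list \<Rightarrow> 'a"

definition tunit :: "'a::field tensor" where
  "tunit w = (if w = [] then 1 else 0)"

definition tmul :: "'a::field tensor \<Rightarrow> 'a tensor \<Rightarrow> 'a tensor" where
  "tmul x y w = (\<Sum>k\<le>length w. x (take k w) * y (drop k w))"

definition tprod :: "'a::field tensor list \<Rightarrow> 'a tensor" where
  "tprod xs = foldr tmul xs tunit"

definition tpow :: "'a::field tensor \<Rightarrow> nat \<Rightarrow> 'a tensor" where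
  "tpow x n = tprod (replicate n x)"

definition vt :: "(nat \<Rightarrow> 'a::field) \<Rightarrow> 'a tensor" where
  "vt u w = (case w of [i] \<Rightarrow> u i | _ \<Rightarrow> 0)"

definition vprod :: "(nat \<Rightarrow> nat \<Rightarrow> 'a::field) \<Rightarrow> nat \<Rightarrow> nat \<Rightarrow> 'a tensor" where
  "vprod u i j = tprod (map (\<lambda>k. vt (u k)) [i..<Suc j])"

text \<open>omega_0 = sum_i (a_i b_i - b_i a_i)\<close>
definition omega0 :: "nat \<Rightarrow> 'a::field tensor" where
  "omega0 g w = (if \<exists>i<g. w = [i, g+i] then 1 else if \<exists>i<g. w = [g+i, i] then -1 else 0)"

text \<open>C on basis tensors: C(a_i b_j) = delta_ij, C(b_i a_j) = - delta_ij, else 0\<close>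
definition Cf :: "nat \<Rightarrow> nat \<Rightarrow> nat \<Rightarrow> 'a::field" where
  "Cf g i j = (if i < g \<and> j = g + i then 1 else if j < g \<and> i = g + j then -1 else 0)"

definition Cbil :: "nat \<Rightarrow> (nat \<Rightarrow> 'a::field) \<Rightarrow> (nat \<Rightarrow> 'a) \<Rightarrow> 'a" where
  "Cbil g x y = (\<Sum>i<2*g. \<Sum>j<2*g. Cf g i j * x i * y j)"

text \<open>Cont(v_1 ... v_2r) = C(v1 v2) ... C(v_(2r-1) v_2r); only used on even-length lists\<close>
fun Cont :: "nat \<Rightarrow> (nat \<Rightarrow> 'a::field) list \<Rightarrow> 'a" where
  "Cont g [] = 1"
| "Cont g [x] = 0"
| "Cont g (x # y # r) = Cbil g x y * Cont g r"

definition cyc :: "'a::field tensor \<Rightarrow> 'a tensor" where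
  "cyc x w = (\<Sum>k<length w. x (rotate k w))"

definition words :: "nat \<Rightarrow> nat \<Rightarrow> nat list set" where
  "words g n = {v. length v = n \<and> set v \<subseteq> {..<2*g}}"

text \<open>1_V^(m) (x) C^(l) : V^(m+2l) -> V^(m), contracting the last 2l factors in consecutive pairs\<close>
definition contr :: "nat \<Rightarrow> nat \<Rightarrow> nat \<Rightarrow> 'a::field tensor \<Rightarrow> 'a tensor" where
  "contr g m l x w = (if length w = m then
     (\<Sum>v\<in>words g (2*l). x (w @ v) * (\<Prod>j<l. Cf g (v ! (2*j)) (v ! (2*j+1)))) else 0)"

text \<open>pi(x) = x - (C(x)/C(omega0)) omega0, applied to the first / last two factors\<close>
definition piF :: "nat \<Rightarrow> 'a::field tensor \<Rightarrow> 'a tensor" where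
  "piF g x w = x w - (1 / of_nat (2*g)) * omega0 g (take 2 w) *
     (\<Sum>i<2*g. \<Sum>j<2*g. Cf g i j * x (i # j # drop 2 w))"

definition piL :: "nat \<Rightarrow> 'a::field tensor \<Rightarrow> 'a tensor" where
  "piL g x w = x w - (1 / of_nat (2*g)) * omega0 g (drop (length w - 2) w) *
     (\<Sum>i<2*g. \<Sum>j<2*g. Cf g i j * x (take (length w - 2) w @ [i, j]))"

definition pipi :: "nat \<Rightarrow> nat \<Rightarrow> 'a::field tensor \<Rightarrow> 'a tensor" where
  "pipi g m x w = (if length w = m then piL g (piF g x) w else 0)"

definition Phi :: "nat \<Rightarrow> nat \<Rightarrow> (nat \<Rightarrow> nat \<Rightarrow> 'a::field) \<Rightarrow> 'a tensor" where
  "Phi g m u w = (\<Sum>k\<in>{k. 1 \<le> k \<and> k \<le> m - 1 \<and> odd k}.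
     (-1) ^ ((k - 1) div 2) *
       (Cont g (map u [m-k+1..<m]) *
          tprod [vt (u m), tpow (omega0 g) ((k - 1) div 2), vprod u 1 (m - k)] w
      + Cont g (map u [2..<k+1]) *
          tprod [vprod u (k+1) m, tpow (omega0 g) ((k - 1) div 2), vt (u 1)] w))"

end

theory Submission
  imports Defs
begin

definition hom :: "nat \<Rightarrow> 'a::field tensor \<Rightarrow> bool" where
  "hom n x \<longleftrightarrow> (\<forall>w. length w \<noteq> n \<longrightarrow> x w = 0)"

definition homog :: "'a::field tensor \<Rightarrow> bool" where
  "homog x \<longleftrightarrow> (\<exists>n. hom n x)"

definition hl :: "'a::field tensor list \<Rightarrow> bool" where
  "hl xs \<longleftrightarrow> (\<forall>x\<in>set xs. homog x)"

definition sc :: "'a::field \<Rightarrow> 'a tensor \<Rightarrow> 'a tensor" where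
  "sc c x = (\<lambda>w. c * x w)"

definition tsum :: "('b \<Rightarrow> 'a::field tensor) \<Rightarrow> 'b set \<Rightarrow> 'a tensor" where
  "tsum f I = (\<lambda>w. \<Sum>i\<in>I. f i w)"

lemma hl_simps[simp]: "hl [] = True" "hl (x # xs) = (homog x \<and> hl xs)"
  "hl (xs @ ys) = (hl xs \<and> hl ys)"
  by (auto simp: hl_def)

lemma hl_replicate[simp]: "homog x \<Longrightarrow> hl (replicate n x)"
  by (auto simp: hl_def)


lemma hom_homog: "hom n x \<Longrightarrow> homog x"
  by (auto simp: homog_def)

lemma tmul_homL:
  assumes "hom n x"
  shows "tmul x y w = (if n \<le> length w then x (take n w) * y (drop n w) else 0)"
proof -
  have "tmul x y w = (\<Sum>k\<le>length w. if k = n then x (take k w) * y (drop k w) else 0)"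
    unfolding tmul_def using assms by (intro sum.cong) (auto simp: hom_def min_def)
  then show ?thesis by (simp add: sum.delta)
qed

lemma tmul_homR:
  assumes "hom n y"
  shows "tmul x y w = (if n \<le> length w then x (take (length w - n) w) * y (drop (length w - n) w) else 0)"
proof -
  have "tmul x y w = (\<Sum>k\<le>length w. if k = length w - n then x (take k w) * y (drop k w) else 0)"
    unfolding tmul_def using assms by (intro sum.cong) (auto simp: hom_def)
  then show ?thesis using assms by (auto simp: sum.delta hom_def)
qed

lemma hom_tmul: "hom a x \<Longrightarrow> hom b y \<Longrightarrow> hom (a + b) (tmul x y)"
  by (auto simp: hom_def tmul_homL)

lemma homog_tmul: "homog x \<Longrightarrow> homog y \<Longrightarrow> homog (tmul x y)"
  by (auto simp: homog_def intro: hom_tmul)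

lemma tmul_assoc:
  assumes "homog x" "homog y"
  shows "tmul (tmul x y) z = tmul x (tmul y z)"
proof -
  obtain a b where ab: "hom a x" "hom b y" using assms by (auto simp: homog_def)
  show ?thesis
  proof (rule ext)
    fix w :: "nat list"
    show "tmul (tmul x y) z w = tmul x (tmul y z) w"
    proof (cases "a + b \<le> length w")
      case True
      then show ?thesis
        by (simp add: tmul_homL[OF hom_tmul[OF ab]] tmul_homL[OF ab(1)] tmul_homL[OF ab(2)]
          take_take drop_take drop_drop min_def mult.assoc add.commute le_diff_conv2)
    next
      case False
      then show ?thesis
        by (simp add: tmul_homL[OF hom_tmul[OF ab]] tmul_homL[OF ab(1)] tmul_homL[OF ab(2)] le_diff_conv2)
    qed
  qed
qed

lemma hom_tunit: "hom 0 tunit"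
  by (auto simp: hom_def tunit_def)

lemma tmul_tunit_right[simp]: "tmul x tunit = x"
  by (rule ext) (simp add: tmul_homR[OF hom_tunit] tunit_def)

lemma tmul_tunit_left[simp]: "tmul tunit x = x"
  by (rule ext) (simp add: tmul_homL[OF hom_tunit] tunit_def)

lemma hom_vt: "hom 1 (vt x)"
  by (auto simp: hom_def vt_def split: list.splits)

lemma homog_vt[simp]: "homog (vt x)"
  using hom_vt hom_homog by blast

lemma hl_map[simp]: "hl (map vt xs)"
  by (auto simp: hl_def)

lemma hom_omega: "hom 2 (omega0 g)"
  by (auto simp: hom_def omega0_def)

lemma homog_omega[simp]: "homog (omega0 g)"
  using hom_omega hom_homog by blast

lemma tprod_Nil[simp]: "tprod [] = tunit" by (simp add: tprod_def)
lemma tprod_Cons[simp]: "tprod (x # xs) = tmul x (tprod xs)" by (simp add: tprod_def)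

lemma homog_tprod: "hl xs \<Longrightarrow> homog (tprod xs)"
  by (induction xs) (auto intro: homog_tmul hom_homog[OF hom_tunit])

lemma tprod_append: "hl xs \<Longrightarrow> tprod (xs @ ys) = tmul (tprod xs) (tprod ys)"
  by (induction xs) (auto simp: tmul_assoc homog_tprod)

lemma hom_tprod_Cons: "hom a x \<Longrightarrow> hom b (tprod xs) \<Longrightarrow> hom (a + b) (tprod (x # xs))"
  by (simp add: hom_tmul)

lemma hom_tprod_append: "hl xs \<Longrightarrow> hom a (tprod xs) \<Longrightarrow> hom b (tprod ys) \<Longrightarrow> hom (a + b) (tprod (xs @ ys))"
  by (simp add: tprod_append hom_tmul)

lemma hom_tprod_vt: "hom (length zs) (tprod (map vt zs))"
  by (induction zs) (auto simp: hom_tunit intro: hom_tmul[OF hom_vt, simplified])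

lemma hom_tprod_om: "hom (2 * j) (tprod (replicate j (omega0 g)))"
  by (induction j) (auto simp: hom_tunit intro: hom_tmul[OF hom_omega, simplified])

lemma tpow_tprod: "tpow x j = tprod (replicate j x)" by (simp add: tpow_def)

lemma vprod_tprod: "vprod u i j = tprod (map vt (map u [i..<Suc j]))"
  by (simp add: vprod_def o_def)

lemma hom_sc: "hom n x \<Longrightarrow> hom n (sc c x)" by (simp add: hom_def sc_def)
lemma hom_tsum: "(\<And>i. i \<in> I \<Longrightarrow> hom n (f i)) \<Longrightarrow> hom n (tsum f I)" by (simp add: hom_def tsum_def)

lemma tmul_scL: "tmul (sc c x) y = sc c (tmul x y)"
  by (rule ext) (simp add: tmul_def sc_def sum_distrib_left mult.assoc)
lemma tmul_scR: "tmul x (sc c y) = sc c (tmul x y)"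
  by (rule ext) (simp add: tmul_def sc_def sum_distrib_left mult.left_commute)
lemma tmul_tsumL: "tmul (tsum f I) y = tsum (\<lambda>i. tmul (f i) y) I"
  by (rule ext) (simp add: tmul_def tsum_def sum_distrib_right sum.swap[of _ I])
lemma tmul_tsumR: "tmul x (tsum f I) = tsum (\<lambda>i. tmul x (f i)) I"
  by (rule ext) (simp add: tmul_def tsum_def sum_distrib_left sum.swap[of _ I])
lemma sc_sc[simp]: "sc a (sc b x) = sc (a * b) x" by (simp add: sc_def mult.assoc)
lemma sc_1[simp]: "sc 1 x = x" by (simp add: sc_def)

lemma omega_pair: "omega0 g [a, b] = Cf g a b"
  by (auto simp: omega0_def Cf_def)

lemma sum_CfR: "(\<Sum>a<2*g. Cf g c a * f a) = (if c < g then f (g+c) else if c < 2*g then - f (c-g) else 0)"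
proof -
  have "(\<Sum>a<2*g. Cf g c a * f a) = (\<Sum>a<2*g. (if a = g + c then (if c < g then f a else 0) else 0)
      + (if a = c - g then (if g \<le> c \<and> c < 2*g then - f a else 0) else 0))"
    by (intro sum.cong) (auto simp: Cf_def)
  also have "\<dots> = (if c < g then f (g+c) else if c < 2*g then - f (c-g) else 0)"
    by (auto simp: sum.distrib sum.delta)
  finally show ?thesis .
qed

lemma sum_CfL: "(\<Sum>a<2*g. Cf g a c * f a) = (if c < g then - f (g+c) else if c < 2*g then f (c-g) else 0)"
proof -
  have "(\<Sum>a<2*g. Cf g a c * f a) = (\<Sum>a<2*g. (if a = g + c then (if c < g then - f a else 0) else 0)
      + (if a = c - g then (if g \<le> c \<and> c < 2*g then f a else 0) else 0))"
    by (intro sum.cong) (auto simp: Cf_def)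
  also have "\<dots> = (if c < g then - f (g+c) else if c < 2*g then f (c-g) else 0)"
    by (auto simp: sum.distrib sum.delta)
  finally show ?thesis .
qed

lemma CC: "(\<Sum>a<2*g. Cf g c a * Cf g a b) = (if c = b \<and> c < 2*g then -1 else (0::'a::field))"
  by (simp add: sum_CfR) (auto simp: Cf_def)

definition supp :: "nat \<Rightarrow> (nat \<Rightarrow> 'a::field) \<Rightarrow> bool" where
  "supp g x \<longleftrightarrow> (\<forall>i. 2 * g \<le> i \<longrightarrow> x i = 0)"

lemma snake_sum:
  assumes "supp g x"
  shows "(\<Sum>a<2*g. \<Sum>b<2*g. Cf g a b * (Cf g c a * x b)) = - x c"
proof -
  have "(\<Sum>a<2*g. \<Sum>b<2*g. Cf g a b * (Cf g c a * x b)) = (\<Sum>b<2*g. \<Sum>a<2*g. Cf g c a * Cf g a b * x b)"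
    by (subst sum.swap) (simp add: mult_ac)
  also have "\<dots> = (\<Sum>b<2*g. (\<Sum>a<2*g. Cf g c a * Cf g a b) * x b)"
    by (simp add: sum_distrib_right)
  also have "\<dots> = (\<Sum>b<2*g. if b = c then (if c < 2*g then - x b else 0) else 0)"
    by (intro sum.cong) (auto simp: CC)
  also have "\<dots> = - x c" using assms by (auto simp: sum.delta supp_def)
  finally show ?thesis .
qed

definition c1 :: "nat \<Rightarrow> 'a::field tensor \<Rightarrow> 'a tensor" where
  "c1 g x w = (\<Sum>a<2*g. \<Sum>b<2*g. Cf g a b * x (w @ [a, b]))"

definition cq :: "nat \<Rightarrow> 'a::field tensor \<Rightarrow> 'a" where
  "cq g Q = (\<Sum>a<2*g. \<Sum>b<2*g. Cf g a b * Q [a, b])"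

lemma hom_c1: "hom (n + 2) x \<Longrightarrow> hom n (c1 g x)"
  by (auto simp: hom_def c1_def)

lemma hom_c1pow: "hom (n + 2 * j) x \<Longrightarrow> hom n ((c1 g ^^ j) x)"
proof (induction j arbitrary: n)
  case 0 then show ?case by simp
next
  case (Suc j)
  have "hom (n + 2) ((c1 g ^^ j) x)" using Suc.IH[of "n+2"] Suc.prems by (simp add: algebra_simps)
  then show ?case by (simp add: hom_c1)
qed

lemma c1_sc: "c1 g (sc c x) = sc c (c1 g x)"
  by (rule ext) (simp add: c1_def sc_def sum_distrib_left mult_ac)

lemma c1_tsum: "c1 g (tsum f I) = tsum (\<lambda>i. c1 g (f i)) I"
  by (rule ext) (simp add: c1_def tsum_def sum_distrib_left sum.swap[of _ I])

lemma c1pow_sc: "(c1 g ^^ j) (sc c x) = sc c ((c1 g ^^ j) x)"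
  by (induction j) (simp_all add: c1_sc)

lemma c1pow_tsum: "(c1 g ^^ j) (tsum f I) = tsum (\<lambda>i. (c1 g ^^ j) (f i)) I"
  by (induction j) (simp_all add: c1_tsum)

lemma c1_tmul_hom2:
  assumes "hom 2 Q"
  shows "c1 g (tmul P Q) = sc (cq g Q) P"
  by (rule ext) (simp add: c1_def tmul_homR[OF assms] sc_def cq_def sum_distrib_left mult_ac)

lemma c1_tmulL:
  assumes P: "hom p P" and Y: "hom q Y" and q: "2 \<le> q"
  shows "c1 g (tmul P Y) = tmul P (c1 g Y)"
proof (rule ext)
  fix w :: "nat list"
  show "c1 g (tmul P Y) w = tmul P (c1 g Y) w"
  proof (cases "p \<le> length w")
    case True
    then show ?thesis
      by (simp add: c1_def tmul_homL[OF P] sum_distrib_left mult_ac)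
  next
    case False
    have "\<And>a b. tmul P Y (w @ [a, b]) = 0"
      using False Y q by (auto simp: tmul_homL[OF P] hom_def)
    then show ?thesis using False by (simp add: c1_def tmul_homL[OF P])
  qed
qed

lemma c1pow_tmulL:
  assumes P: "hom p P" and Y: "hom q Y" and q: "2 * j \<le> q"
  shows "(c1 g ^^ j) (tmul P Y) = tmul P ((c1 g ^^ j) Y)"
  using q
proof (induction j)
  case 0 then show ?case by simp
next
  case (Suc j)
  have h: "hom (q - 2 * j) ((c1 g ^^ j) Y)"
    by (rule hom_c1pow) (use Suc.prems Y in simp)
  have "(c1 g ^^ Suc j) (tmul P Y) = c1 g (tmul P ((c1 g ^^ j) Y))" using Suc by simp
  also have "\<dots> = tmul P (c1 g ((c1 g ^^ j) Y))"
    by (rule c1_tmulL[OF P h]) (use Suc.prems in simp)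
  finally show ?case by simp
qed

lemma vt_pair: "tmul (vt x) (vt y) [a, b] = x a * y b"
  by (simp add: tmul_homL[OF hom_vt] vt_def)

lemma cq_vv: "cq g (tmul (vt x) (vt y)) = Cbil g x y"
  by (simp add: cq_def Cbil_def vt_pair mult_ac)

lemma cq_omega: "cq g (omega0 g) = (of_nat (2*g) :: 'a::field)"
proof -
  have "cq g (omega0 g) = (\<Sum>a<2*g. (1::'a))"
    unfolding cq_def omega_pair
  proof (intro sum.cong refl)
    fix a assume "a \<in> {..<2*g}"
    then show "(\<Sum>b<2*g. Cf g a b * Cf g a b) = (1::'a)"
      by (subst sum_CfR) (auto simp: Cf_def)
  qed
  then show ?thesis by simp
qed

lemma hom_vv: "hom 2 (tmul (vt x) (vt y))"
  by (metis hom_tmul hom_vt one_add_one)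

lemma snake1:
  assumes "supp g x"
  shows "c1 g (tmul P (tmul (omega0 g) (vt x))) = sc (-1) (tmul P (vt x))"
proof (rule ext)
  fix w :: "nat list"
  have h3: "hom 3 (tmul (omega0 g) (vt x))" using hom_tmul[OF hom_omega hom_vt] by simp
  show "c1 g (tmul P (tmul (omega0 g) (vt x))) w = sc (-1) (tmul P (vt x)) w"
  proof (cases w rule: rev_exhaust)
    case Nil
    then show ?thesis by (simp add: c1_def sc_def tmul_homR[OF h3] tmul_homR[OF hom_vt])
  next
    case (snoc w' c)
    have e: "\<And>a b. tmul P (tmul (omega0 g) (vt x)) (w @ [a, b]) = P w' * (Cf g c a * x b)"
      using snoc by (simp add: tmul_homR[OF h3] tmul_homL[OF hom_omega] vt_def omega_pair)
    have "c1 g (tmul P (tmul (omega0 g) (vt x))) w = P w' * (\<Sum>a<2*g. \<Sum>b<2*g. Cf g a b * (Cf g c a * x b))"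
      by (simp add: c1_def e sum_distrib_left mult_ac)
    also have "\<dots> = - (P w' * x c)" by (simp add: snake_sum[OF assms])
    finally show ?thesis using snoc by (simp add: sc_def tmul_homR[OF hom_vt] vt_def)
  qed
qed

lemma Cont_snoc2: "even (length ys) \<Longrightarrow> Cont g (ys @ [a, b]) = Cont g ys * Cbil g a b"
  by (induction g ys rule: Cont.induct) (auto simp: mult_ac)

lemma funpow_Suc_apply: "(f ^^ Suc j) x = (f ^^ j) (f x)"
  by (simp add: funpow_Suc_right del: funpow.simps)

lemma G1:
  assumes "length ys = 2 * j" "hl xs"
  shows "(c1 g ^^ j) (tprod (xs @ map vt ys)) = sc (Cont g ys) (tprod xs)"
  using assms
proof (induction j arbitrary: ys)
  case 0 then show ?case by (simp add: tprod_def)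
next
  case (Suc j)
  obtain zs b where zs: "ys = zs @ [b]" using Suc.prems(1)
    by (cases ys rule: rev_exhaust) auto
  obtain ys' a where ys': "zs = ys' @ [a]" using Suc.prems(1) zs
    by (cases zs rule: rev_exhaust) auto
  have ys: "ys = ys' @ [a, b]" using zs ys' by simp
  have len: "length ys' = 2 * j" using Suc.prems(1) ys by simp
  have "tprod (xs @ map vt ys) = tmul (tprod (xs @ map vt ys')) (tmul (vt a) (vt b))"
    using Suc.prems(2) ys tprod_append[of "xs @ map vt ys'" "[vt a, vt b]"] by simp
  then have "(c1 g ^^ Suc j) (tprod (xs @ map vt ys)) = (c1 g ^^ j) (sc (Cbil g a b) (tprod (xs @ map vt ys')))"
    by (simp only: funpow_Suc_apply c1_tmul_hom2[OF hom_vv] cq_vv)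
  also have "\<dots> = sc (Cbil g a b * Cont g ys') (tprod xs)"
    by (simp add: c1pow_sc Suc.IH[OF len Suc.prems(2)])
  finally show ?case using ys len by (simp add: Cont_snoc2 mult_ac)
qed

lemma rep_Suc_snoc: "replicate (Suc j) x = replicate j x @ [x]"
  by (simp add: replicate_append_same)

lemma G2:
  assumes "hl xs"
  shows "(c1 g ^^ j) (tprod (xs @ replicate j (omega0 g))) = sc (of_nat (2*g) ^ j) (tprod xs)"
proof (induction j)
  case 0 then show ?case by simp
next
  case (Suc j)
  have "tprod (xs @ replicate (Suc j) (omega0 g)) = tmul (tprod (xs @ replicate j (omega0 g))) (omega0 g)"
    using assms tprod_append[of "xs @ replicate j (omega0 g)" "[omega0 g]"] by (simp add: replicate_append_same)
  then have "(c1 g ^^ Suc j) (tprod (xs @ replicate (Suc j) (omega0 g)))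
      = (c1 g ^^ j) (sc (of_nat (2*g)) (tprod (xs @ replicate j (omega0 g))))"
    by (simp only: funpow_Suc_apply c1_tmul_hom2[OF hom_omega] cq_omega)
  also have "\<dots> = sc (of_nat (2*g) ^ Suc j) (tprod xs)"
    by (simp add: c1pow_sc Suc.IH mult_ac)
  finally show ?case .
qed

lemma G3:
  assumes "hl xs" "supp g x"
  shows "(c1 g ^^ j) (tprod (xs @ replicate j (omega0 g) @ [vt x])) = sc ((-1) ^ j) (tprod (xs @ [vt x]))"
proof (induction j)
  case 0 then show ?case by simp
next
  case (Suc j)
  have "tprod (xs @ replicate (Suc j) (omega0 g) @ [vt x])
      = tmul (tprod (xs @ replicate j (omega0 g))) (tmul (omega0 g) (vt x))"
    using assms tprod_append[of "xs @ replicate j (omega0 g)" "[omega0 g, vt x]"] by (simp add: replicate_app_Cons_same)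
  moreover have "tmul (tprod (xs @ replicate j (omega0 g))) (vt x) = tprod (xs @ replicate j (omega0 g) @ [vt x])"
    using assms tprod_append[of "xs @ replicate j (omega0 g)" "[vt x]"] by simp
  ultimately have "(c1 g ^^ Suc j) (tprod (xs @ replicate (Suc j) (omega0 g) @ [vt x]))
      = (c1 g ^^ j) (sc (-1) (tprod (xs @ replicate j (omega0 g) @ [vt x])))"
    by (simp only: funpow_Suc_apply snake1[OF assms(2)])
  also have "\<dots> = sc ((-1) ^ Suc j) (tprod (xs @ [vt x]))"
    by (simp add: c1pow_sc Suc.IH)
  finally show ?case .
qed

definition rot :: "nat \<Rightarrow> 'a::field tensor \<Rightarrow> 'a tensor" where
  "rot s x w = x (rotate s w)"

lemma rot_tmul:
  assumes A: "hom a A" and B: "hom b B" and a: "0 < a"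
  shows "rot b (tmul A B) = tmul B A"
proof (rule ext)
  fix w :: "nat list"
  show "rot b (tmul A B) w = tmul B A w"
  proof (cases "length w = a + b")
    case True
    then have r: "rotate b w = drop b w @ take b w"
      using a by (simp add: rotate_drop_take)
    show ?thesis using True
      by (simp add: rot_def r tmul_homL[OF A] tmul_homL[OF B] mult.commute)
  next
    case False
    then show ?thesis
      using hom_tmul[OF A B] hom_tmul[OF B A] by (simp add: rot_def hom_def add.commute)
  qed
qed

lemma rot_tsum: "rot s (tsum f I) = tsum (\<lambda>i. rot s (f i)) I"
  by (rule ext) (simp add: rot_def tsum_def)

lemma rot_0: "rot 0 x = x"
  by (rule ext) (simp add: rot_def)

lemma cyc_rot:
  assumes "hom N X"
  shows "cyc X = tsum (\<lambda>s. rot s X) {..<N}"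
proof (rule ext)
  fix w :: "nat list"
  show "cyc X w = tsum (\<lambda>s. rot s X) {..<N} w"
  proof (cases "length w = N")
    case True then show ?thesis by (simp add: cyc_def tsum_def rot_def)
  next
    case False then show ?thesis using assms by (simp add: cyc_def tsum_def rot_def hom_def)
  qed
qed

lemma words_Suc: "(\<Sum>v\<in>words g (Suc n). f v) = (\<Sum>a<2*g. \<Sum>v\<in>words g n. f (a # v))"
proof -
  have eq: "words g (Suc n) = (\<lambda>(a, v). a # v) ` ({..<2*g} \<times> words g n)"
  proof
    show "words g (Suc n) \<subseteq> (\<lambda>(a, v). a # v) ` ({..<2*g} \<times> words g n)"
    proof
      fix v assume "v \<in> words g (Suc n)"
      then obtain a v' where "v = a # v'" "a < 2*g" "v' \<in> words g n"
        by (cases v) (auto simp: words_def)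
      then show "v \<in> (\<lambda>(a, v). a # v) ` ({..<2*g} \<times> words g n)" by auto
    qed
  qed (auto simp: words_def)
  have inj: "inj_on (\<lambda>(a, v). a # v) ({..<2*g} \<times> words g n)"
    by (auto simp: inj_on_def)
  show ?thesis
  proof -
    have "(\<Sum>v\<in>words g (Suc n). f v) = (\<Sum>p\<in>{..<2*g} \<times> words g n. f (fst p # snd p))"
      using sum.reindex[OF inj, of f] unfolding eq by (simp add: split_def o_def)
    also have "\<dots> = (\<Sum>a<2*g. \<Sum>v\<in>words g n. f (a # v))"
      by (simp add: sum.cartesian_product split_def)
    finally show ?thesis .
  qed
qed

lemma words_0: "words g 0 = {[]}"
  by (auto simp: words_def)

lemma ctr_eq:
  "(\<Sum>v\<in>words g (2*l). x (w @ v) * (\<Prod>j<l. Cf g (v ! (2*j)) (v ! (2*j+1)))) = (c1 g ^^ l) x w"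
proof (induction l arbitrary: w)
  case 0 then show ?case by (simp add: words_0)
next
  case (Suc l)
  have nth: "\<And>a b v j. (a # b # v) ! (2 * Suc j) = v ! (2 * j)"
            "\<And>a b v j. (a # b # v) ! (2 * Suc j + 1) = v ! (2 * j + 1)"
    by (simp_all add: numeral_2_eq_2)
  have "(\<Sum>v\<in>words g (2*Suc l). x (w @ v) * (\<Prod>j<Suc l. Cf g (v ! (2*j)) (v ! (2*j+1))))
     = (\<Sum>a<2*g. \<Sum>b<2*g. \<Sum>v\<in>words g (2*l). x (w @ a # b # v) * (Cf g a b * (\<Prod>j<l. Cf g (v ! (2*j)) (v ! (2*j+1)))))"
    by (simp add: words_Suc prod.lessThan_Suc_shift nth del: prod.lessThan_Suc)
  also have "\<dots> = (\<Sum>a<2*g. \<Sum>b<2*g. Cf g a b * (c1 g ^^ l) x (w @ [a, b]))"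
    by (simp add: Suc.IH[symmetric] sum_distrib_left mult_ac)
  also have "\<dots> = (c1 g ^^ Suc l) x w"
    by (simp add: c1_def)
  finally show ?case .
qed

lemma contr_eq: "contr g m l x = (\<lambda>w. if length w = m then (c1 g ^^ l) x w else 0)"
  by (rule ext) (simp only: contr_def ctr_eq)

lemma pipi_cong:
  assumes m: "2 \<le> m" and eq: "\<forall>w. length w = m \<longrightarrow> x w = y w"
  shows "pipi g m x = pipi g m y"
proof -
  have F: "piF g x w = piF g y w" if "length w = m" for w
    unfolding piF_def using that m eq by (auto intro!: sum.cong)
  show ?thesis
  proof (rule ext)
    fix w :: "nat list"
    show "pipi g m x w = pipi g m y w"
      unfolding pipi_def piL_def using m by (auto simp: F intro!: sum.cong)
  qed
qed

lemma piF_tsum: "piF g (tsum f I) = tsum (\<lambda>i. piF g (f i)) I"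
  by (rule ext) (simp add: piF_def tsum_def sum_subtractf sum_distrib_left sum.swap[of _ I])

lemma piL_tsum: "piL g (tsum f I) = tsum (\<lambda>i. piL g (f i)) I"
  by (rule ext) (simp add: piL_def tsum_def sum_subtractf sum_distrib_left sum.swap[of _ I])

lemma piF_sc: "piF g (sc c x) = sc c (piF g x)"
  by (rule ext) (simp add: piF_def sc_def sum_distrib_left right_diff_distrib mult_ac)

lemma piL_sc: "piL g (sc c x) = sc c (piL g x)"
  by (rule ext) (simp add: piL_def sc_def sum_distrib_left right_diff_distrib mult_ac)

lemma pipi_tsum: "pipi g m (tsum f I) = tsum (\<lambda>i. pipi g m (f i)) I"
  by (rule ext) (simp add: pipi_def piF_tsum piL_tsum, simp add: tsum_def pipi_def)

lemma pipi_sc: "pipi g m (sc c x) = sc c (pipi g m x)"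
  by (rule ext) (simp add: pipi_def piF_sc piL_sc, simp add: sc_def pipi_def)

lemma piL_zero: "piL g (\<lambda>_. 0) = (\<lambda>_. 0)"
  by (rule ext) (simp add: piL_def)

lemma piF_zero: "piF g (\<lambda>_. 0) = (\<lambda>_. 0)"
  by (rule ext) (simp add: piF_def)

lemma pipi_zero: "pipi g m (\<lambda>_. 0) = (\<lambda>_. 0)"
  by (rule ext) (simp add: pipi_def piL_zero piF_zero)

lemma sc_zero: "sc c (\<lambda>_. 0) = (\<lambda>_. 0)"
  by (simp add: sc_def)

lemma piF_killL:
  assumes g: "0 < g"
  shows "piF g (tmul (omega0 g) (Z::'a::field_char_0 tensor)) = (\<lambda>_. 0)"
proof (rule ext)
  fix w :: "nat list"
  have s: "(\<Sum>i<2*g. \<Sum>j<2*g. Cf g i j * tmul (omega0 g) Z (i # j # drop 2 w)) = of_nat (2*g) * Z (drop 2 w)"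
  proof -
    have "(\<Sum>i<2*g. \<Sum>j<2*g. Cf g i j * tmul (omega0 g) Z (i # j # drop 2 w))
        = cq g (omega0 g) * Z (drop 2 w)"
      by (simp add: tmul_homL[OF hom_omega] cq_def sum_distrib_left mult_ac)
    then show ?thesis by (simp add: cq_omega)
  qed
  show "piF g (tmul (omega0 g) Z) w = 0"
  proof (cases "2 \<le> length w")
    case True
    then show ?thesis using g unfolding piF_def s by (simp add: tmul_homL[OF hom_omega])
  next
    case False
    then have "length (take 2 w) \<noteq> 2" by simp
    then have "omega0 g (take 2 w) = 0" using hom_omega[of g] unfolding hom_def by blast
    then show ?thesis using False hom_omega[of g] unfolding hom_def
      by (auto simp: piF_def tmul_homL[OF hom_omega])
  qed
qed

lemma pipi_killL:
  assumes g: "0 < g"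
  shows "pipi g m (tmul (omega0 g) (Z::'a::field_char_0 tensor)) = (\<lambda>_. 0)"
  by (rule ext) (simp add: pipi_def piF_killL[OF g] piL_zero)

lemma pipi_killR:
  assumes g: "0 < g" and m: "4 \<le> m" and Z: "hom (m - 2) (Z::'a::field_char_0 tensor)"
  shows "pipi g m (tmul Z (omega0 g)) = (\<lambda>_. 0)"
proof (rule ext)
  fix w :: "nat list"
  let ?y = "piF g (tmul Z (omega0 g))"
  have Y: "?y v = piF g Z (take (m-2) v) * omega0 g (drop (m-2) v)" if v: "length v = m" for v
  proof -
    have t1: "take (m - 2) (i # j # drop 2 v) = i # j # drop 2 (take (m-2) v)" for i j
    proof -
      have "m - 2 = Suc (Suc (m - 4))" using m by simp
      then show ?thesis using m by (simp add: drop_take)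
    qed
    have t2: "drop (m - 2) (i # j # drop 2 v) = drop (m-2) v" for i j
    proof -
      have "m - 2 = Suc (Suc (m - 4))" using m by simp
      then show ?thesis using m by (simp add: add.commute)
    qed
    have "min 2 (m-2) = 2" using m by simp
    then have t3: "take 2 (take (m-2) v) = take 2 v" by (simp add: take_take)
    have A: "tmul Z (omega0 g) v = Z (take (m-2) v) * omega0 g (drop (m-2) v)"
      using v m by (simp add: tmul_homR[OF hom_omega])
    have B: "tmul Z (omega0 g) (i#j#drop 2 v) = Z (i#j#drop 2 (take (m-2) v)) * omega0 g (drop (m-2) v)" for i j
      using v m by (simp add: tmul_homR[OF hom_omega] t1 t2)
    have C: "(\<Sum>i<2*g. \<Sum>j<2*g. Cf g i j * tmul Z (omega0 g) (i#j#drop 2 v))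
       = (\<Sum>i<2*g. \<Sum>j<2*g. Cf g i j * Z (i#j#drop 2 (take (m-2) v))) * omega0 g (drop (m-2) v)"
      by (simp add: B sum_distrib_left sum_distrib_right mult_ac)
    show ?thesis
      by (simp only: piF_def A C t3) (simp add: algebra_simps)
  qed
  show "pipi g m (tmul Z (omega0 g)) w = 0"
  proof (cases "length w = m")
    case True
    have s: "(\<Sum>i<2*g. \<Sum>j<2*g. Cf g i j * ?y (take (length w - 2) w @ [i, j]))
        = piF g Z (take (m-2) w) * of_nat (2*g)"
    proof -
      have "(\<Sum>i<2*g. \<Sum>j<2*g. Cf g i j * ?y (take (length w - 2) w @ [i, j]))
         = piF g Z (take (m-2) w) * cq g (omega0 g)"
        using True m by (simp add: Y cq_def sum_distrib_left mult_ac)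
      then show ?thesis by (simp add: cq_omega)
    qed
    show ?thesis using True g m unfolding pipi_def piL_def s by (simp add: Y)
  next
    case False
    then show ?thesis by (simp add: pipi_def)
  qed
qed

definition vs :: "(nat \<Rightarrow> nat \<Rightarrow> 'a::field) \<Rightarrow> nat \<Rightarrow> nat \<Rightarrow> 'a tensor list" where
  "vs u i j = map vt (map u [i..<Suc j])"

abbreviation Om :: "nat \<Rightarrow> nat \<Rightarrow> 'a::field tensor list" where
  "Om g j \<equiv> replicate j (omega0 g)"

definition ev :: "nat \<Rightarrow> nat \<Rightarrow> 'a::field" where
  "ev i j = (if j = i then 1 else 0)"

lemma hl_vs[simp]: "hl (vs u i j)" by (simp only: vs_def hl_map)

lemma hom_vs: "hom (Suc j - i) (tprod (vs u i j))"
  unfolding vs_def using hom_tprod_vt[of "map u [i..<Suc j]"] length_map length_upt by metis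

lemma vs_split: "i \<le> Suc k \<Longrightarrow> k \<le> j \<Longrightarrow> vs u i j = vs u i k @ vs u (Suc k) j"
proof -
  assume a: "i \<le> Suc k" "k \<le> j"
  have "[i..<Suc j] = [i..<Suc k] @ [Suc k..<Suc k + (j - k)]"
    using upt_add_eq_append[of i "Suc k" "j - k"] a by simp
  then show ?thesis using a by (simp add: vs_def)
qed

lemma vs_single: "vs u i i = [vt (u i)]" by (simp add: vs_def)

lemma vs_last: "1 \<le> m \<Longrightarrow> vs u 1 m = vs u 1 (m - 1) @ [vt (u m)]"
  using vs_split[of 1 "m-1" m u] by (simp add: vs_single)

lemma vs_first: "1 \<le> k \<Longrightarrow> vs u 1 k = vt (u 1) # vs u 2 k"
  using vs_split[of 1 1 k u] by (simp add: vs_single numeral_2_eq_2)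

lemma vprod_vs: "vprod u i j = tprod (vs u i j)" by (simp add: vprod_tprod vs_def)

lemma hom_app: "hl xs \<Longrightarrow> hom a (tprod xs) \<Longrightarrow> hom b (tprod ys) \<Longrightarrow> c = a + b \<Longrightarrow> hom c (tprod (xs @ ys))"
  using hom_tprod_append by blast

lemma Cf_big: "2 * g \<le> a \<Longrightarrow> Cf g a b = 0"
  by (simp add: Cf_def)

lemma omega_split: "(omega0 g :: 'z::field tensor) = tsum (\<lambda>i. tmul (vt (ev i)) (vt (Cf g i))) {..<2*g}"
proof (rule ext)
  fix w :: "nat list"
  show "(omega0 g w :: 'z) = tsum (\<lambda>i. tmul (vt (ev i)) (vt (Cf g i))) {..<2*g} w"
  proof (cases "length w = 2")
    case True
    then obtain a b where w: "w = [a, b]" by (auto simp: length_Suc_conv numeral_2_eq_2)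
    have "(\<Sum>i<2*g. ev i a * Cf g i b) = (\<Sum>i<2*g. if i = a then Cf g a b else (0::'z))"
      by (intro sum.cong) (auto simp: ev_def)
    also have "\<dots> = Cf g a b" by (simp add: sum.delta Cf_big)
    finally have eq: "(\<Sum>i<2*g. ev i a * Cf g i b) = (Cf g a b :: 'z)" .
    have "(omega0 g w :: 'z) = Cf g a b" by (simp add: w omega_pair)
    moreover have "tsum (\<lambda>i. tmul (vt (ev i)) (vt (Cf g i))) {..<2*g} w = ((\<Sum>i<2*g. ev i a * Cf g i b) :: 'z)"
      by (simp add: w tsum_def vt_pair)
    ultimately show ?thesis using eq by argo
  next
    case False
    have "hom 2 (tsum (\<lambda>i. tmul (vt (ev i)) (vt (Cf g i))) {..<2*g})"
      by (rule hom_tsum) (rule hom_vv)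
    then have h1: "tsum (\<lambda>i. tmul (vt (ev i)) (vt (Cf g i))) {..<2*g} w = 0"
      using False unfolding hom_def by blast
    have h2: "(omega0 g w :: 'z) = 0" using hom_omega[of g] False unfolding hom_def by blast
    show ?thesis using h1 h2 by simp
  qed
qed

lemma tprod_split_mid:
  assumes "hl xs"
  shows "tprod (xs @ omega0 g # ys) = tsum (\<lambda>i. tprod (xs @ vt (ev i) # vt (Cf g i) # ys)) {..<2*g}"
proof -
  have "tprod (xs @ omega0 g # ys) = tmul (tprod xs) (tmul (omega0 g) (tprod ys))"
    using assms by (simp add: tprod_append)
  also have "\<dots> = tmul (tprod xs) (tsum (\<lambda>i. tmul (tmul (vt (ev i)) (vt (Cf g i))) (tprod ys)) {..<2*g})"
    by (subst omega_split) (simp add: tmul_tsumL)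
  also have "\<dots> = tsum (\<lambda>i. tmul (tprod xs) (tmul (vt (ev i)) (tmul (vt (Cf g i)) (tprod ys)))) {..<2*g}"
    by (simp add: tmul_tsumR tmul_assoc)
  also have "\<dots> = tsum (\<lambda>i. tprod (xs @ vt (ev i) # vt (Cf g i) # ys)) {..<2*g}"
    using assms by (simp add: tprod_append)
  finally show ?thesis .
qed

lemma vt_combine: "tsum (\<lambda>i. sc (d i) (tmul (vt (f i)) Y)) I = tmul (vt (\<lambda>j. \<Sum>i\<in>I. d i * f i j)) Y"
proof (rule ext)
  fix w :: "nat list"
  show "tsum (\<lambda>i. sc (d i) (tmul (vt (f i)) Y)) I w = tmul (vt (\<lambda>j. \<Sum>i\<in>I. d i * f i j)) Y w"
    by (cases w) (simp_all add: tsum_def sc_def tmul_homL[OF hom_vt] vt_def sum_distrib_right sum_distrib_left mult_ac)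
qed

lemma vt_scale: "vt (\<lambda>j. c * x j) = sc c (vt x)"
  by (rule ext) (simp add: vt_def sc_def split: list.splits)

lemma Cbil_ev:
  assumes "i < 2*g"
  shows "Cbil g x (ev i) = (\<Sum>a<2*g. Cf g a i * x a)"
  unfolding Cbil_def
proof (intro sum.cong refl)
  fix a
  have "(\<Sum>b<2*g. Cf g a b * x a * ev i b) = (\<Sum>b<2*g. if b = i then Cf g a b * x a else 0)"
    by (intro sum.cong) (auto simp: ev_def)
  then show "(\<Sum>b<2*g. Cf g a b * x a * ev i b) = Cf g a i * x a"
    using assms by (simp add: sum.delta)
qed

lemma supp_ev: "i < 2*g \<Longrightarrow> supp g (ev i)"
  by (simp add: supp_def ev_def)

lemma combine_sum:
  assumes "supp g x"
  shows "(\<Sum>i<2*g. Cbil g x (ev i) * Cf g i j) = - x j"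
proof -
  have "(\<Sum>i<2*g. Cbil g x (ev i) * Cf g i j) = (\<Sum>i<2*g. \<Sum>a<2*g. Cf g a i * Cf g i j * x a)"
    by (simp add: Cbil_ev sum_distrib_right sum_distrib_left mult_ac)
  also have "\<dots> = (\<Sum>a<2*g. (\<Sum>i<2*g. Cf g a i * Cf g i j) * x a)"
    by (subst sum.swap) (simp add: sum_distrib_right)
  also have "\<dots> = (\<Sum>a<2*g. if a = j then (if j < 2*g then - x a else 0) else 0)"
    by (intro sum.cong) (auto simp: CC)
  also have "\<dots> = - x j" using assms by (auto simp: sum.delta supp_def)
  finally show ?thesis .
qed

lemma sign_lemma: "r \<le> l \<Longrightarrow> (-1::'a::field) ^ (l - r) = (-1) ^ l * (-1) ^ r"
proof -
  assume "r \<le> l"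
  then have "(-1::'a) ^ l = (-1) ^ (l - r) * (-1) ^ r" by (simp add: power_add[symmetric])
  moreover have "(-1::'a) ^ r * (-1) ^ r = 1" by (simp add: power_mult_distrib[symmetric])
  ultimately show ?thesis by (metis mult.assoc mult_1_right)
qed

lemma tsum_cong: "(\<And>i. i \<in> I \<Longrightarrow> f i = h i) \<Longrightarrow> tsum f I = tsum h I"
  by (rule ext) (simp add: tsum_def)

lemma hom_single: "hom 1 (tprod [vt x])"
  using hom_vt by simp

lemma funpow_split: "a + b = l \<Longrightarrow> (f ^^ l) z = (f ^^ a) ((f ^^ b) z)"
  by (metis comp_apply funpow_add)

context
  fixes g m l :: nat and u :: "nat \<Rightarrow> nat \<Rightarrow> 'a::field_char_0"
begin

lemma caseA:
  assumes g: "0 < g" and r: "1 \<le> r" "r \<le> l" and m: "2 \<le> m"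
  shows "pipi g m ((c1 g ^^ l) (rot (2*r) (tprod (vs u 1 m @ Om g l)))) = (\<lambda>_. 0)"
proof -
  have hA: "hom (m + 2*(l-r)) (tprod (vs u 1 m @ Om g (l-r)))"
    by (rule hom_app[OF _ hom_vs hom_tprod_om]) simp_all
  have hB: "hom (2*r) (tprod (Om g r))" by (rule hom_tprod_om)
  have "(Om g l :: 'a tensor list) = Om g (l-r) @ Om g r" using r replicate_add[of "l-r" r "omega0 g"] by simp
  then have X: "tprod (vs u 1 m @ Om g l) = tmul (tprod (vs u 1 m @ Om g (l-r))) (tprod (Om g r))"
    using tprod_append[of "vs u 1 m @ Om g (l-r)" "Om g r"] by simp
  have "rot (2*r) (tprod (vs u 1 m @ Om g l)) = tmul (tprod (Om g r)) (tprod (vs u 1 m @ Om g (l-r)))"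
    unfolding X by (rule rot_tmul[OF hA hB]) (use m in simp)
  also have "\<dots> = tmul (omega0 g) (tprod (Om g (r-1) @ vs u 1 m @ Om g (l-r)))"
  proof -
    have "(Om g r :: 'a tensor list) = omega0 g # Om g (r-1)" using r by (cases r) auto
    then show ?thesis using tprod_append[of "Om g (r-1)" "vs u 1 m @ Om g (l-r)"]
      by (simp add: tmul_assoc homog_tprod)
  qed
  finally have R: "rot (2*r) (tprod (vs u 1 m @ Om g l)) = tmul (omega0 g) (tprod (Om g (r-1) @ vs u 1 m @ Om g (l-r)))" .
  have hY: "hom (2*(r-1) + (m + 2*(l-r))) (tprod (Om g (r-1) @ vs u 1 m @ Om g (l-r)))"
    by (rule hom_app[OF _ hom_tprod_om hA]) simp_all
  have "(c1 g ^^ l) (tmul (omega0 g) (tprod (Om g (r-1) @ vs u 1 m @ Om g (l-r))))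
      = tmul (omega0 g) ((c1 g ^^ l) (tprod (Om g (r-1) @ vs u 1 m @ Om g (l-r))))"
    by (rule c1pow_tmulL[OF hom_omega hY]) (use r m in simp)
  then show ?thesis using R by (simp add: pipi_killL[OF g])
qed

lemma caseB:
  assumes g: "0 < g" and r: "r < l" and m: "1 \<le> m" and su: "supp g (u m)"
  shows "(c1 g ^^ l) (rot (2*r+1) (tprod (vs u 1 m @ Om g l)))
     = sc (- ((-1) ^ (l-r-1))) ((c1 g ^^ r) (tprod (vt (u m) # Om g r @ vs u 1 (m-1))))"
proof -
  define d where "d = l - r - 1"
  define A :: "nat \<Rightarrow> 'a tensor list" where "A i = vs u 1 m @ Om g d @ [vt (ev i)]" for i
  define B :: "nat \<Rightarrow> 'a tensor list" where "B i = vt (Cf g i) # Om g r" for i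
  define R :: "'a tensor list" where "R = Om g r @ vs u 1 (m-1)"
  have hlA: "hl (A i)" for i by (simp add: A_def)
  have hlB: "hl (B i)" for i by (simp add: B_def)
  have hA: "hom (m + 2*d + 1) (tprod (A i))" for i
  proof -
    have h: "hom (2*d + 1) (tprod (Om g d @ [vt (ev i)]) :: 'a tensor)"
      by (rule hom_app[OF _ hom_tprod_om hom_single]) simp_all
    show ?thesis unfolding A_def by (rule hom_app[OF _ hom_vs h]) simp_all
  qed
  have hB: "hom (2*r+1) (tprod (B i))" for i
    unfolding B_def using hom_tprod_Cons[OF hom_vt[of "Cf g i"] hom_tprod_om[of r g]] by simp
  have "(Om g l :: 'a tensor list) = Om g d @ Om g (Suc r)"
    using replicate_add[of d "Suc r" "omega0 g"] r by (simp add: d_def)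
  then have "tprod (vs u 1 m @ Om g l) = tprod ((vs u 1 m @ Om g d) @ omega0 g # Om g r)"
    by simp
  also have "\<dots> = tsum (\<lambda>i. tprod ((vs u 1 m @ Om g d) @ vt (ev i) # vt (Cf g i) # Om g r)) {..<2*g}"
    by (rule tprod_split_mid) simp
  also have "\<dots> = tsum (\<lambda>i. tmul (tprod (A i)) (tprod (B i))) {..<2*g}"
  proof (rule tsum_cong)
    fix i
    have "(vs u 1 m @ Om g d) @ vt (ev i) # vt (Cf g i) # Om g r = A i @ B i"
      by (simp add: A_def B_def)
    then show "tprod ((vs u 1 m @ Om g d) @ vt (ev i) # vt (Cf g i) # Om g r) = tmul (tprod (A i)) (tprod (B i))"
      using tprod_append[OF hlA] by simp
  qed
  finally have X: "tprod (vs u 1 m @ Om g l) = tsum (\<lambda>i. tmul (tprod (A i)) (tprod (B i))) {..<2*g}" .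
  have Rot: "rot (2*r+1) (tprod (vs u 1 m @ Om g l)) = tsum (\<lambda>i. tprod (B i @ A i)) {..<2*g}"
    unfolding X rot_tsum
  proof (rule tsum_cong)
    fix i
    show "rot (2*r+1) (tmul (tprod (A i)) (tprod (B i))) = tprod (B i @ A i)"
      using rot_tmul[OF hA hB] tprod_append[OF hlB] m by simp
  qed
  have step3: "(c1 g ^^ d) (tprod (B i @ A i))
      = sc ((-1)^d) (tprod ((vt (Cf g i) # R) @ map vt [u m, ev i]))" if i: "i < 2*g" for i
  proof -
    have G: "(c1 g ^^ d) (tprod ((B i @ vs u 1 m) @ Om g d @ [vt (ev i)])) = sc ((-1)^d) (tprod ((B i @ vs u 1 m) @ [vt (ev i)]))"
      by (rule G3) (simp_all add: hlB supp_ev i)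
    have e1: "B i @ A i = (B i @ vs u 1 m) @ Om g d @ [vt (ev i)]" by (simp add: A_def)
    have e2: "(B i @ vs u 1 m) @ [vt (ev i)] = (vt (Cf g i) # R) @ map vt [u m, ev i]"
      using vs_last[OF m, of u] by (simp add: B_def R_def)
    show ?thesis unfolding e1 e2[symmetric] by (rule G)
  qed
  have step1: "c1 g (tprod ((vt (Cf g i) # R) @ map vt [u m, ev i]))
      = sc (Cbil g (u m) (ev i)) (tmul (vt (Cf g i)) (tprod R))" for i
    using G1[of "[u m, ev i]" 1 "vt (Cf g i) # R" g] by (simp add: R_def)
  have comb: "(\<lambda>j. \<Sum>i<2*g. (-1)^d * Cbil g (u m) (ev i) * Cf g i j) = (\<lambda>j. (- ((-1)^d)) * u m j)"
  proof (rule ext)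
    fix j
    have "(\<Sum>i<2*g. (-1)^d * Cbil g (u m) (ev i) * Cf g i j) = (-1)^d * (\<Sum>i<2*g. Cbil g (u m) (ev i) * Cf g i j)"
      by (simp add: sum_distrib_left mult_ac)
    also have "\<dots> = (- ((-1)^d)) * u m j" by (simp add: combine_sum[OF su])
    finally show "(\<Sum>i<2*g. (-1)^d * Cbil g (u m) (ev i) * Cf g i j) = (- ((-1)^d)) * u m j" .
  qed
  have "c1 g ((c1 g ^^ d) (rot (2*r+1) (tprod (vs u 1 m @ Om g l))))
      = tsum (\<lambda>i. sc ((-1)^d * Cbil g (u m) (ev i)) (tmul (vt (Cf g i)) (tprod R))) {..<2*g}"
    unfolding Rot c1pow_tsum c1_tsum
  proof (rule tsum_cong)
    fix i assume "i \<in> {..<2*g}"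
    then have i: "i < 2*g" by simp
    show "c1 g ((c1 g ^^ d) (tprod (B i @ A i))) = sc ((-1)^d * Cbil g (u m) (ev i)) (tmul (vt (Cf g i)) (tprod R))"
      by (simp only: step3[OF i] c1_sc step1 sc_sc)
  qed
  also have "\<dots> = tmul (vt (\<lambda>j. \<Sum>i<2*g. (-1)^d * Cbil g (u m) (ev i) * Cf g i j)) (tprod R)"
    by (rule vt_combine)
  also have "\<dots> = sc (- ((-1)^d)) (tprod (vt (u m) # R))"
    by (simp only: comb vt_scale tmul_scL tprod_Cons)
  finally have S: "c1 g ((c1 g ^^ d) (rot (2*r+1) (tprod (vs u 1 m @ Om g l)))) = sc (- ((-1)^d)) (tprod (vt (u m) # R))" .
  have "(c1 g ^^ l) (rot (2*r+1) (tprod (vs u 1 m @ Om g l)))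
      = (c1 g ^^ r) ((c1 g ^^ Suc d) (rot (2*r+1) (tprod (vs u 1 m @ Om g l))))"
    by (rule funpow_split) (use r d_def in simp)
  also have "\<dots> = (c1 g ^^ r) (sc (- ((-1)^d)) (tprod (vt (u m) # R)))"
    using S by simp
  finally show ?thesis by (simp add: c1pow_sc d_def R_def)
qed

lemma caseB1:
  assumes m: "2*r + 3 \<le> m"
  shows "(c1 g ^^ r) (tprod (vt (u m) # Om g r @ vs u 1 (m-1)))
    = sc (Cont g (map u [m-2*r..<m])) (tprod (vt (u m) # Om g r @ vs u 1 (m-2*r-1)))"
proof -
  have s: "vs u 1 (m-1) = vs u 1 (m-2*r-1) @ vs u (m-2*r) (m-1)"
    using vs_split[of 1 "m-2*r-1" "m-1" u] m by (simp add: Suc_diff_Suc)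
  have "Suc (m-1) = m" using m by simp
  then have v: "vs u (m-2*r) (m-1) = map vt (map u [m-2*r..<m])" by (simp only: vs_def)
  have G: "(c1 g ^^ r) (tprod ((vt (u m) # Om g r @ vs u 1 (m-2*r-1)) @ map vt (map u [m-2*r..<m])))
    = sc (Cont g (map u [m-2*r..<m])) (tprod (vt (u m) # Om g r @ vs u 1 (m-2*r-1)))"
    by (rule G1) (use m in simp_all)
  show ?thesis unfolding s v using G by simp
qed

lemma caseB2:
  assumes g: "0 < g" and r: "m - 1 \<le> 2*r" and m: "odd m" "5 \<le> m"
  shows "pipi g m (sc c ((c1 g ^^ r) (tprod (vt (u m) # Om g r @ vs u 1 (m-1))))) = (\<lambda>_. 0)"
proof -
  obtain M where mM: "m - 1 = 2*M" using m by (auto elim: oddE)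
  have M2: "2 \<le> M" using mM m by simp
  have rM: "M \<le> r" using r mM by simp
  have "Suc (m-1) = m" using m by simp
  then have v: "vs u 1 (m-1) = map vt (map u [1..<m])" by (simp only: vs_def)
  have G: "(c1 g ^^ M) (tprod ((vt (u m) # Om g r) @ map vt (map u [1..<m])))
      = sc (Cont g (map u [1..<m])) (tprod (vt (u m) # Om g r))"
    by (rule G1) (use mM in simp_all)
  have Om: "(Om g r :: 'a tensor list) = Om g M @ Om g (r-M)"
    using replicate_add[of M "r-M" "omega0 g"] rM by simp
  have G2': "(c1 g ^^ (r-M)) (tprod ((vt (u m) # Om g M) @ Om g (r-M)))
      = sc (of_nat (2*g) ^ (r-M)) (tprod (vt (u m) # Om g M))"
    by (rule G2) simp
  have OmM: "(Om g M :: 'a tensor list) = Om g (M-1) @ [omega0 g]"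
    using M2 by (cases M) (auto simp: replicate_append_same)
  have Z: "tprod (vt (u m) # Om g M) = tmul (tprod (vt (u m) # Om g (M-1))) (omega0 g)"
    unfolding OmM using tprod_append[of "vt (u m) # Om g (M-1)" "[omega0 g]"] by simp
  have hZ: "hom (m-2) (tprod (vt (u m) # Om g (M-1)))"
  proof -
    have "m - 2 = 1 + 2*(M-1)" using mM M2 by simp
    then show ?thesis using hom_tprod_Cons[OF hom_vt[of "u m"] hom_tprod_om[of "M-1" g]] by simp
  qed
  have "(c1 g ^^ r) (tprod (vt (u m) # Om g r @ vs u 1 (m-1)))
      = (c1 g ^^ (r-M)) ((c1 g ^^ M) (tprod ((vt (u m) # Om g r) @ map vt (map u [1..<m]))))"
  proof -
    have FS: "(c1 g ^^ r) z = (c1 g ^^ (r-M)) ((c1 g ^^ M) z)" for z :: "'a tensor"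
      by (rule funpow_split) (use rM in simp)
    show ?thesis unfolding v FS by (simp only: append_assoc append_Cons append_Nil)
  qed
  also have "\<dots> = sc (Cont g (map u [1..<m])) (sc (of_nat (2*g) ^ (r-M)) (tmul (tprod (vt (u m) # Om g (M-1))) (omega0 g)))"
    unfolding G unfolding c1pow_sc unfolding Om using G2' Z by simp
  finally have E: "(c1 g ^^ r) (tprod (vt (u m) # Om g r @ vs u 1 (m-1)))
      = sc (Cont g (map u [1..<m])) (sc (of_nat (2*g) ^ (r-M)) (tmul (tprod (vt (u m) # Om g (M-1))) (omega0 g)))" .
  have m4: "4 \<le> m" using m by simp
  show ?thesis unfolding E pipi_sc pipi_killR[OF g m4 hZ] sc_zero by (rule refl)
qed

lemma caseC_rot:
  assumes t: "1 \<le> t" "t < m"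
  shows "rot (2*l+t) (tprod (vs u 1 m @ Om g l)) = tprod (vs u (Suc (m-t)) m @ Om g l @ vs u 1 (m-t))"
proof -
  have s: "vs u 1 m = vs u 1 (m-t) @ vs u (Suc (m-t)) m" by (rule vs_split) (use t in simp_all)
  have hA: "hom (m-t) (tprod (vs u 1 (m-t)))" using hom_vs[of "m-t" 1 u] by simp
  have hB: "hom (2*l+t) (tprod (vs u (Suc (m-t)) m @ Om g l))"
    by (rule hom_app[OF _ hom_vs hom_tprod_om]) (use t in simp_all)
  have X: "tprod (vs u 1 m @ Om g l) = tmul (tprod (vs u 1 (m-t))) (tprod (vs u (Suc (m-t)) m @ Om g l))"
    unfolding s using tprod_append[of "vs u 1 (m-t)" "vs u (Suc (m-t)) m @ Om g l"] by simp
  have "rot (2*l+t) (tprod (vs u 1 m @ Om g l)) = tmul (tprod (vs u (Suc (m-t)) m @ Om g l)) (tprod (vs u 1 (m-t)))"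
    unfolding X by (rule rot_tmul[OF hA hB]) (use t in simp)
  also have "\<dots> = tprod ((vs u (Suc (m-t)) m @ Om g l) @ vs u 1 (m-t))"
    by (rule tprod_append[symmetric]) simp
  finally show ?thesis by simp
qed

lemma caseC_odd:
  assumes g: "0 < g" and t: "odd t" "1 \<le> t" "t < m" and m: "odd m" "5 \<le> m" "m + 1 \<le> 2*l"
  shows "pipi g m ((c1 g ^^ l) (tprod (vs u (Suc (m-t)) m @ Om g l @ vs u 1 (m-t)))) = (\<lambda>_. 0)"
proof -
  obtain a where a: "m = 2*a+1" using m by (auto elim: oddE)
  obtain b where b: "t = 2*b+1" using t by (auto elim: oddE)
  define q where "q = a - b"
  have q: "m - t = 2*q" using a b t q_def by simp
  have q1: "1 \<le> q" "q \<le> l" using q t m by simp_all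
  define V where "V = vs u (Suc (m-t)) m"
  have v: "vs u 1 (m-t) = map vt (map u [1..<Suc (m-t)])" by (simp only: vs_def)
  have G: "(c1 g ^^ q) (tprod ((V @ Om g l) @ map vt (map u [1..<Suc (m-t)])))
      = sc (Cont g (map u [1..<Suc (m-t)])) (tprod (V @ Om g l))"
    by (rule G1) (use q in \<open>simp_all add: V_def\<close>)
  have Om: "(Om g l :: 'a tensor list) = Om g q @ Om g (l-q)"
    using replicate_add[of q "l-q" "omega0 g"] q1 by simp
  have G2': "(c1 g ^^ (l-q)) (tprod ((V @ Om g q) @ Om g (l-q)))
      = sc (of_nat (2*g) ^ (l-q)) (tprod (V @ Om g q))"
    by (rule G2) (simp add: V_def)
  have Omq: "(Om g q :: 'a tensor list) = Om g (q-1) @ [omega0 g]"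
    using q1 by (cases q) (auto simp: replicate_append_same)
  have Z: "tprod (V @ Om g q) = tmul (tprod (V @ Om g (q-1))) (omega0 g)"
    unfolding Omq using tprod_append[of "V @ Om g (q-1)" "[omega0 g]"] by (simp add: V_def)
  have hZ: "hom (m-2) (tprod (V @ Om g (q-1)))"
    unfolding V_def by (rule hom_app[OF _ hom_vs hom_tprod_om]) (use q q1 t in simp_all)
  have "(c1 g ^^ l) (tprod (V @ Om g l @ vs u 1 (m-t)))
      = (c1 g ^^ (l-q)) ((c1 g ^^ q) (tprod ((V @ Om g l) @ map vt (map u [1..<Suc (m-t)]))))"
  proof -
    have FS: "(c1 g ^^ l) z = (c1 g ^^ (l-q)) ((c1 g ^^ q) z)" for z :: "'a tensor"
      by (rule funpow_split) (use q1 in simp)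
    show ?thesis unfolding v FS by (simp only: append_assoc append_Cons append_Nil)
  qed
  also have "\<dots> = sc (Cont g (map u [1..<Suc (m-t)])) (sc (of_nat (2*g) ^ (l-q)) (tmul (tprod (V @ Om g (q-1))) (omega0 g)))"
    unfolding G unfolding c1pow_sc unfolding Om using G2' Z by simp
  finally have E: "(c1 g ^^ l) (tprod (V @ Om g l @ vs u 1 (m-t)))
      = sc (Cont g (map u [1..<Suc (m-t)])) (sc (of_nat (2*g) ^ (l-q)) (tmul (tprod (V @ Om g (q-1))) (omega0 g)))" .
  have m4: "4 \<le> m" using m by simp
  show ?thesis unfolding V_def[symmetric] E pipi_sc pipi_killR[OF g m4 hZ] sc_zero by (rule refl)
qed

lemma caseC_even:
  assumes t: "even t" "2 \<le> t" "t < m" and m: "odd m" "m + 1 \<le> 2*l" and su: "supp g (u 1)"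
  shows "(c1 g ^^ l) (tprod (vs u (Suc (m-t)) m @ Om g l @ vs u 1 (m-t)))
    = sc ((-1) ^ (l - (m-t-1) div 2) * Cont g (map u [2..<Suc (m-t)]))
         (tprod (vs u (Suc (m-t)) m @ Om g ((m-t-1) div 2) @ [vt (u 1)]))"
proof -
  define k where "k = m - t"
  define p where "p = (k - 1) div 2"
  have k1: "1 \<le> k" using t k_def by simp
  have kp: "k - 1 = 2*p" using t m k_def p_def by (auto elim!: oddE evenE)
  have pl: "p \<le> l" using kp k_def m t by simp
  define V where "V = vs u (Suc k) m"
  have v: "vs u 1 k = vt (u 1) # map vt (map u [2..<Suc k])"
    using vs_first[OF k1, of u] by (simp only: vs_def)
  have G: "(c1 g ^^ p) (tprod ((V @ Om g l @ [vt (u 1)]) @ map vt (map u [2..<Suc k])))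
      = sc (Cont g (map u [2..<Suc k])) (tprod (V @ Om g l @ [vt (u 1)]))"
  proof -
    have len: "length (map u [2..<Suc k]) = 2 * p" using kp k1 by (simp del: upt_Suc)
    show ?thesis by (rule G1[OF len]) (simp add: V_def)
  qed
  have Om: "(Om g l :: 'a tensor list) = Om g p @ Om g (l-p)"
    using replicate_add[of p "l-p" "omega0 g"] pl by simp
  have G3': "(c1 g ^^ (l-p)) (tprod ((V @ Om g p) @ Om g (l-p) @ [vt (u 1)]))
      = sc ((-1) ^ (l-p)) (tprod ((V @ Om g p) @ [vt (u 1)]))"
    by (rule G3) (use su in \<open>simp_all add: V_def\<close>)
  have "(c1 g ^^ l) (tprod (V @ Om g l @ vs u 1 k))
      = (c1 g ^^ (l-p)) ((c1 g ^^ p) (tprod ((V @ Om g l @ [vt (u 1)]) @ map vt (map u [2..<Suc k]))))"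
  proof -
    have FS: "(c1 g ^^ l) z = (c1 g ^^ (l-p)) ((c1 g ^^ p) z)" for z :: "'a tensor"
      by (rule funpow_split) (use pl in simp)
    show ?thesis unfolding v FS by (simp only: append_assoc append_Cons append_Nil)
  qed
  also have "\<dots> = sc ((-1) ^ (l-p) * Cont g (map u [2..<Suc k])) (tprod (V @ Om g p @ [vt (u 1)]))"
    unfolding G unfolding c1pow_sc unfolding Om using G3' by (simp add: mult.commute)
  finally show ?thesis unfolding V_def k_def p_def .
qed

end

lemma P1_eq: "tprod [vt x, tpow (omega0 g) r, vprod u 1 j] = tprod (vt x # Om g r @ vs u 1 j)"
  by (simp add: tpow_tprod vprod_vs tprod_append)

lemma P2_eq: "tprod [vprod u i j, tpow (omega0 g) p, vt x] = tprod (vs u i j @ Om g p @ [vt x])"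
  by (simp add: tpow_tprod vprod_vs tprod_append)

theorem lemma5p3:
  fixes g m l :: nat and u :: "nat \<Rightarrow> nat \<Rightarrow> 'a::field_char_0"
  assumes "0 < g" and "odd m" and "5 \<le> m" and "m + 1 \<le> 2 * l"
    and "\<forall>k\<in>{1..m}. \<forall>i. 2 * g \<le> i \<longrightarrow> u k i = 0"
  shows "pipi g m (contr g m l (cyc (tmul (vprod u 1 m) (tpow (omega0 g) l))))
       = pipi g m (\<lambda>w. of_nat (2*g) ^ l * vprod u 1 m w + (-1) ^ l * Phi g m u w)"
proof -
  note g = assms(1) and mo = assms(2) and m5 = assms(3) and ml = assms(4)
  have su1: "supp g (u 1)" using assms(5) m5 by (simp add: supp_def)
  have sum: "supp g (u m)" using assms(5) m5 by (simp add: supp_def)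
  define N where "N = m + 2*l"
  define X where "X = tprod (vs u 1 m @ Om g l)"
  have X_eq: "tmul (vprod u 1 m) (tpow (omega0 g) l) = X"
    by (simp add: X_def vprod_vs tpow_tprod tprod_append)
  have hX: "hom N X" unfolding X_def N_def
    by (rule hom_app[OF _ hom_vs hom_tprod_om]) simp_all
  define T where "T s = (c1 g ^^ l) (rot s X)" for s
  define K where "K = {k. 1 \<le> k \<and> k \<le> m - 1 \<and> odd k}"
  define S2 where "S2 = (\<lambda>k. N - k) ` K"
  define P1 where "P1 k = tprod [vt (u m), tpow (omega0 g) ((k - 1) div 2), vprod u 1 (m - k)]" for k
  define P2 where "P2 k = tprod [vprod u (k+1) m, tpow (omega0 g) ((k - 1) div 2), vt (u 1)]" for k
  define c1k where "c1k k = (-1)^l * (-1)^((k-1) div 2) * Cont g (map u [m-k+1..<m])" for k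
  define c2k where "c2k k = (-1)^l * (-1)^((k-1) div 2) * Cont g (map u [2..<k+1])" for k
  define F where "F s = (if s = 0 then sc (of_nat (2*g) ^ l) (vprod u 1 m)
      else if s \<in> K then sc (c1k s) (P1 s) else if s \<in> S2 then sc (c2k (N-s)) (P2 (N-s)) else (\<lambda>_. 0))" for s
  have K_le: "k \<in> K \<Longrightarrow> 1 \<le> k \<and> k \<le> m - 1 \<and> odd k" for k by (simp add: K_def)
  have S2_ge: "s \<in> S2 \<Longrightarrow> 2*l + 1 \<le> s \<and> s < N \<and> even s" for s
    using mo ml by (auto simp: S2_def K_def N_def)
  have LHS: "pipi g m (contr g m l (cyc (tmul (vprod u 1 m) (tpow (omega0 g) l))))
      = tsum (\<lambda>s. pipi g m (T s)) {..<N}"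
  proof -
    have "pipi g m (contr g m l (cyc X)) = pipi g m ((c1 g ^^ l) (cyc X))"
      unfolding contr_eq by (rule pipi_cong) (use m5 in auto)
    also have "\<dots> = tsum (\<lambda>s. pipi g m (T s)) {..<N}"
      by (simp add: cyc_rot[OF hX] c1pow_tsum pipi_tsum T_def)
    finally show ?thesis unfolding X_eq .
  qed

  have C1: "pipi g m (T s) = pipi g m (F s)" if sN: "s < N" for s
  proof -
    consider (z) "s = 0" | (a) "even s" "s \<noteq> 0" "s \<le> 2*l" | (b) "odd s" "s < 2*l" | (c) "2*l < s"
      by (metis dvd_triv_left le_neq_implies_less not_less)
    then show ?thesis
    proof cases
      case z
      have "T s = sc (of_nat (2*g) ^ l) (tprod (vs u 1 m))"
        unfolding T_def z rot_0 X_def by (rule G2) simp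
      then show ?thesis by (simp add: F_def z vprod_vs)
    next
      case a
      obtain r where r: "s = 2*r" using a by (auto elim: evenE)
      have r1: "1 \<le> r" "r \<le> l" using a r by simp_all
      have "pipi g m (T s) = (\<lambda>_. 0)"
        unfolding T_def X_def r by (rule caseA[where u=u and m=m and g=g and l=l and r=r]) (use g r1 m5 in simp_all)
      moreover have "F s = (\<lambda>_. 0)"
        using a S2_ge[of s] by (auto simp: F_def K_def)
      ultimately show ?thesis by (simp add: pipi_zero)
    next
      case b
      obtain r where r: "s = 2*r+1" using b by (auto elim: oddE)
      have rl: "r < l" using b r by simp
      have TB: "T s = sc (- ((-1) ^ (l-r-1))) ((c1 g ^^ r) (tprod (vt (u m) # Om g r @ vs u 1 (m-1))))"
        unfolding T_def X_def r by (rule caseB[where u=u and m=m and g=g and l=l and r=r]) (use g rl m5 sum in simp_all)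
      show ?thesis
      proof (cases "2*r + 3 \<le> m")
        case True
        have sK: "s \<in> K" using True r by (simp add: K_def)
        have sgn: "- ((-1) ^ (l-r-1)) = ((-1) ^ l * (-1) ^ r :: 'a)"
        proof -
          have "l - r = Suc (l-r-1)" using rl by simp
          then have "(-1::'a) ^ (l - r) = - ((-1) ^ (l-r-1))" by (metis power_Suc mult_minus1)
          moreover have "(-1::'a) ^ (l - r) = (-1) ^ l * (-1) ^ r" by (rule sign_lemma) (use rl in simp)
          ultimately show ?thesis by argo
        qed
        have e1: "m - s + 1 = m - 2*r" using True r by simp
        have e2: "(s - 1) div 2 = r" using r by simp
        have e3: "m - s = m - 2*r - 1" using r by simp
        have "T s = sc (c1k s) (P1 s)"
          unfolding TB caseB1[where u=u and m=m and g=g and r=r, OF True] P1_def c1k_def e1 e2 e3 P1_eq sc_sc sgn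
          using True by (simp add: Suc_diff_Suc)
        then show ?thesis using sK by (simp add: F_def r)
      next
        case False
        have "pipi g m (T s) = (\<lambda>_. 0)"
          unfolding TB by (rule caseB2[where u=u and m=m and g=g and r=r]) (use g mo m5 False in \<open>auto elim!: oddE\<close>)
        moreover have "F s = (\<lambda>_. 0)"
        proof -
          have "m \<le> s" using r False mo by (auto elim!: oddE)
          then have "s \<notin> K" using K_le[of s] by auto
          moreover have "s \<notin> S2" using S2_ge[of s] b by auto
          ultimately show ?thesis using r by (simp add: F_def)
        qed
        ultimately show ?thesis by (simp add: pipi_zero)
      qed
    next
      case c
      define t where "t = s - 2*l"
      have t: "1 \<le> t" "t < m" using c sN t_def N_def by simp_all
      have st: "s = 2*l + t" using c t_def by simp
      have R: "rot s X = tprod (vs u (Suc (m-t)) m @ Om g l @ vs u 1 (m-t))"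
        unfolding X_def st by (rule caseC_rot[where u=u and m=m and g=g and l=l and t=t]) (use t in simp_all)
      have sK: "s \<notin> K" using c ml K_le[of s] by auto
      show ?thesis
      proof (cases "even t")
        case False
        have "pipi g m (T s) = (\<lambda>_. 0)"
          unfolding T_def R by (rule caseC_odd[where u=u and m=m and g=g and l=l and t=t]) (use g t mo m5 ml False in simp_all)
        moreover have "s \<notin> S2"
        proof
          assume "s \<in> S2"
          then obtain k where k: "k \<in> K" "s = N - k" by (auto simp: S2_def)
          then have "t = m - k" using st N_def K_le[of k] by simp
          then show False using False mo k(1) K_le[of k] by (auto elim!: oddE)
        qed
        moreover have "s \<noteq> 0" using c by simp
        ultimately show ?thesis using sK by (simp add: F_def pipi_zero)
      next
        case True
        define k where "k = m - t"
        have t2: "2 \<le> t" using True t by (auto elim: evenE)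
        have kK: "k \<in> K" using True t2 t mo k_def by (auto simp: K_def)
        have Nk: "N - s = k" using st k_def N_def t by simp
        have sS2: "s \<in> S2" using kK Nk sN unfolding S2_def by (auto intro!: image_eqI[of _ _ k])
        have kodd: "odd k" using kK by (simp add: K_def)
        have pl: "(k - 1) div 2 \<le> l" using k_def ml t by simp
        have TC: "T s = sc ((-1) ^ (l - (m-t-1) div 2) * Cont g (map u [2..<Suc (m-t)]))
            (tprod (vs u (Suc (m-t)) m @ Om g ((m-t-1) div 2) @ [vt (u 1)]))"
          unfolding T_def R by (rule caseC_even[where u=u and m=m and g=g and l=l and t=t]) (use True t2 t mo ml su1 in simp_all)
        have "T s = sc (c2k (N-s)) (P2 (N-s))"
          unfolding TC Nk c2k_def P2_def P2_eq k_def[symmetric] sign_lemma[OF pl]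
          by (simp add: mult_ac)
        then show ?thesis using sK sS2 c by (simp add: F_def)
      qed
    qed
  qed
  have K0: "0 \<notin> K" by (simp add: K_def)
  have S20: "0 \<notin> S2" using S2_ge[of 0] by auto
  have KS2: "s \<in> K \<Longrightarrow> s \<notin> S2" for s using K_le[of s] S2_ge[of s] ml by auto
  have KN: "K \<subseteq> {..<N}" unfolding K_def N_def by auto
  have S2N: "S2 \<subseteq> {..<N}" using S2_ge by auto
  have finK: "finite K" using KN finite_subset by blast
  have RHS: "(\<lambda>w. of_nat (2*g) ^ l * vprod u 1 m w + (-1) ^ l * Phi g m u w) = tsum F {..<N}"
  proof (rule ext)
    fix w :: "nat list"
    have Fs: "F s w = (if s = 0 then of_nat (2*g) ^ l * vprod u 1 m w else 0)
        + (if s \<in> K then c1k s * P1 s w else 0) + (if s \<in> S2 then c2k (N-s) * P2 (N-s) w else 0)" for s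
      using K0 S20 KS2[of s] by (auto simp: F_def sc_def)
    have N0: "0 < N" using m5 N_def by simp
    have "tsum F {..<N} w = of_nat (2*g) ^ l * vprod u 1 m w
        + (\<Sum>s\<in>K. c1k s * P1 s w) + (\<Sum>s\<in>S2. c2k (N-s) * P2 (N-s) w)"
    proof -
      have "tsum F {..<N} w = (\<Sum>s<N. (if s = 0 then of_nat (2*g) ^ l * vprod u 1 m w else 0))
        + (\<Sum>s<N. if s \<in> K then c1k s * P1 s w else 0) + (\<Sum>s<N. if s \<in> S2 then c2k (N-s) * P2 (N-s) w else 0)"
        by (simp add: tsum_def Fs sum.distrib)
      also have "\<dots> = of_nat (2*g) ^ l * vprod u 1 m w
        + (\<Sum>s\<in>{..<N} \<inter> K. c1k s * P1 s w) + (\<Sum>s\<in>{..<N} \<inter> S2. c2k (N-s) * P2 (N-s) w)"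
        using N0 by (simp add: sum.inter_restrict)
      also have "{..<N} \<inter> K = K" using KN by blast
      also have "{..<N} \<inter> S2 = S2" using S2N by blast
      finally show ?thesis .
    qed
    also have "(\<Sum>s\<in>S2. c2k (N-s) * P2 (N-s) w) = (\<Sum>k\<in>K. c2k k * P2 k w)"
    proof -
      have inj: "inj_on (\<lambda>k. N - k) K" unfolding inj_on_def K_def N_def by auto
      have "(\<Sum>s\<in>S2. c2k (N-s) * P2 (N-s) w) = (\<Sum>k\<in>K. c2k (N - (N-k)) * P2 (N - (N-k)) w)"
        unfolding S2_def by (simp add: sum.reindex[OF inj])
      also have "\<dots> = (\<Sum>k\<in>K. c2k k * P2 k w)"
        by (rule sum.cong) (auto simp: N_def K_def)
      finally show ?thesis .
    qed
    also have "(-1) ^ l * Phi g m u w = (\<Sum>k\<in>K. c1k k * P1 k w) + (\<Sum>k\<in>K. c2k k * P2 k w)"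
      unfolding Phi_def K_def[symmetric] P1_def[symmetric] P2_def[symmetric] c1k_def c2k_def
      by (simp add: sum_distrib_left sum.distrib[symmetric] algebra_simps)
    ultimately show "of_nat (2*g) ^ l * vprod u 1 m w + (-1) ^ l * Phi g m u w = tsum F {..<N} w"
      by (simp add: add.assoc)
  qed
  have "tsum (\<lambda>s. pipi g m (T s)) {..<N} = tsum (\<lambda>s. pipi g m (F s)) {..<N}"
    by (rule tsum_cong) (simp add: C1)
  then show ?thesis by (simp only: LHS RHS pipi_tsum)
qed


end
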